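(* Let $r:\mathfrak h^*\to\wedge^2\mathfrak g$ be a triangular dynamical $r$-matrix. The following are equivalent: (1) $\mathfrak g_\lambda=\mathfrak g$ for some $\lambda\in\mathfrak h^*$ (i.e. $\mathrm{rank}\,r=\dim\mathfrak g-\dim\mathfrak h$, and $r$ is called non-degenerate); (2) the bundle map $\Lambda^\#:A^*\to A$ is an isomorphism at every point; (3) $\mathfrak g_\lambda=\mathfrak g$ for all $\lambda\in\mathfrak h^*$; (4) $(M,\pi)$ is a symplectic manifold.
   Context: Let $\mathfrak g$ be a finite-dimensional real Lie algebra and $\mathfrak h\subset\mathfrak g$ an abelian Lie subalgebra of dimension $l$ with basis $h_1,\dots,h_l$; $(\lambda^1,\dots,\lambda^l)$ are the induced coordinates on $\mathfrak h^*$. A triangular dynamical $r$-matrix is a smooth map $r:\mathfrak h^*\to\wedge^2\mathfrak g$ with $[h,r(\lambda)]=0$ for $h\in\mathfrak h$ and $\sum_i h_i\wedge\frac{\partial r}{\partial\lambda^i}+\frac12[r,r]=0$ (Schouten-type bracket on $\wedge^\bullet\mathfrak g$). For $\rho\in\wedge^2\mathfrak g$, $\rho^\#:\mathfrak g^*\to\mathfrak g$ is $\langle\rho^\#\xi,\eta\rangle=\rho(\xi,\eta)$; $\mathfrak h^\perp\subset\mathfrak g^*$ is the annihilator of $\mathfrak h$; $\mathfrak g_\lambda=\mathfrak h+r(\lambda)^\#\mathfrak h^\perp$ and $\mathrm{rank}\,r=\dim\mathfrak g_\lambda-\dim\mathfrak h$. $A=T\mathfrak h^*\times\mathfrak g$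 is the vector bundle over $\mathfrak h^*$ with fiber $A_\lambda\cong\mathfrak h^*\oplus\mathfrak g$, so $A_\lambda^*\cong\mathfrak h\oplus\mathfrak g^*$; $\Lambda^\#:A^*\to A$ is given at $\lambda$ by $\Lambda^\#_\lambda(h,\xi)=(i^*\xi,\,-h+r(\lambda)^\#\xi)$, where $i^*:\mathfrak g^*\to\mathfrak h^*$ is restriction. $G$ is a connected Lie group with Lie algebra $\mathfrak g$, $M=\mathfrak h^*\times G$, $\pi=\sum_i\vec{h_i}\wedge\frac{\partial}{\partial\lambda^i}+\vec{r(\lambda)}$, where $\vec u$ is the left-invariant vector/multivector field along the $G$-factor generated by $u$. *)

theory Defs
  imports "HOL-Analysis.Analysis"
begin

text \<open>The Lie algebra g is real^'n (basis e_a = axis a 1, dual basis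
identified with real^'n via the dot product), with bracket br. The abelian
subalgebra h has basis hb :: 'l \<Rightarrow> real^'n, so dim h = CARD('l); a point
lambda of h* is given by its coordinates (lambda^i = lambda(h_i)) in real^'l,
and an element of h by its coefficient vector c in real^'l (meaning sum_i c_i h_i).\<close>

definition lie_algebra :: "(real^'n \<Rightarrow> real^'n \<Rightarrow> real^'n) \<Rightarrow> bool" where
  "lie_algebra br \<longleftrightarrow> bilinear br \<and> (\<forall>x. br x x = 0) \<and>
     (\<forall>x y z. br x (br y z) + br y (br z x) + br z (br x y) = 0)"

definition abelian_subalg_basis ::
  "(real^'n \<Rightarrow> real^'n \<Rightarrow> real^'n) \<Rightarrow> ('l::finite \<Rightarrow> real^'n) \<Rightarrow> bool" where
  "abelian_subalg_basis br hb \<longleftrightarrow> inj hb \<and> independent (range hb) \<and>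
     (\<forall>x\<in>span (range hb). \<forall>y\<in>span (range hb). br x y = 0)"

text \<open>Smooth (C-infinity) maps between finite-dimensional spaces: all iterated
partial derivatives exist, are continuous, and the maps are differentiable.\<close>
definition smooth_map :: "(real^'l::finite \<Rightarrow> 'b::real_normed_vector) \<Rightarrow> bool" where
  "smooth_map f \<longleftrightarrow> (\<exists>F :: 'l list \<Rightarrow> real^'l \<Rightarrow> 'b. F [] = f \<and>
     (\<forall>ks. continuous_on UNIV (F ks)) \<and>
     (\<forall>ks x. (F ks has_derivative (\<lambda>v. \<Sum>i\<in>UNIV. (v $ i) *\<^sub>R F (i # ks) x)) (at x)))"

text \<open>A bivector rho in wedge^2 g is an antisymmetric matrix, rho = 1/2 sum rho_ab e_a wedge e_b,
viewed as the bilinear form rho(xi,eta) = sum rho_ab xi_a eta_b on g*.\<close>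
definition is_bivector :: "real^'n^'n \<Rightarrow> bool" where
  "is_bivector \<rho> \<longleftrightarrow> transpose \<rho> = - \<rho>"

definition biv_eval :: "real^'n^'n \<Rightarrow> real^'n \<Rightarrow> real^'n \<Rightarrow> real" where
  "biv_eval \<rho> \<xi> \<eta> = (\<Sum>a\<in>UNIV. \<Sum>b\<in>UNIV. \<rho>$a$b * \<xi>$a * \<eta>$b)"

text \<open>rho^# : g* \<rightarrow> g, <rho^# xi, eta> = rho(xi, eta).\<close>
definition sharp :: "real^'n^'n \<Rightarrow> real^'n \<Rightarrow> real^'n" where
  "sharp \<rho> \<xi> = transpose \<rho> *v \<xi>"

text \<open>Adjoint action [h, rho] of g on wedge^2 g (derivation extension).\<close>
definition ad_biv :: "(real^'n \<Rightarrow> real^'n \<Rightarrow> real^'n) \<Rightarrow> real^'n \<Rightarrow> real^'n^'n \<Rightarrow> real^'n^'n" where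
  "ad_biv br h \<rho> = (\<chi> p q. (\<Sum>a\<in>UNIV. \<rho>$a$q * (br h (axis a 1))$p)
                         + (\<Sum>b\<in>UNIV. \<rho>$p$b * (br h (axis b 1))$q))"

text \<open>Trivectors are represented as alternating trilinear forms on g*;
x wedge y wedge z evaluated on (xi,eta,zeta) is the determinant.\<close>
definition w3 :: "real^'n \<Rightarrow> real^'n \<Rightarrow> real^'n \<Rightarrow> real^'n \<Rightarrow> real^'n \<Rightarrow> real^'n \<Rightarrow> real" where
  "w3 x y z \<xi> \<eta> \<zeta> =
     (\<xi> \<bullet> x) * ((\<eta> \<bullet> y) * (\<zeta> \<bullet> z) - (\<eta> \<bullet> z) * (\<zeta> \<bullet> y))
   - (\<xi> \<bullet> y) * ((\<eta> \<bullet> x) * (\<zeta> \<bullet> z) - (\<eta> \<bullet> z) * (\<zeta> \<bullet> x))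
   + (\<xi> \<bullet> z) * ((\<eta> \<bullet> x) * (\<zeta> \<bullet> y) - (\<eta> \<bullet> y) * (\<zeta> \<bullet> x))"

text \<open>Schouten bracket of bivectors, extended bilinearly from
[a wedge b, c wedge d] = [a,c] wedge b wedge d - [a,d] wedge b wedge c
                        - [b,c] wedge a wedge d + [b,d] wedge a wedge c.\<close>
definition schouten2 ::
  "(real^'n \<Rightarrow> real^'n \<Rightarrow> real^'n) \<Rightarrow> real^'n^'n \<Rightarrow> real^'n^'n \<Rightarrow> real^'n \<Rightarrow> real^'n \<Rightarrow> real^'n \<Rightarrow> real" where
  "schouten2 br \<rho> \<sigma> \<xi> \<eta> \<zeta> = (\<Sum>a\<in>UNIV. \<Sum>b\<in>UNIV. \<Sum>c\<in>UNIV. \<Sum>d\<in>UNIV.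
     (1/4) * \<rho>$a$b * \<sigma>$c$d *
      ( w3 (br (axis a 1) (axis c 1)) (axis b 1) (axis d 1) \<xi> \<eta> \<zeta>
      - w3 (br (axis a 1) (axis d 1)) (axis b 1) (axis c 1) \<xi> \<eta> \<zeta>
      - w3 (br (axis b 1) (axis c 1)) (axis a 1) (axis d 1) \<xi> \<eta> \<zeta>
      + w3 (br (axis b 1) (axis d 1)) (axis a 1) (axis c 1) \<xi> \<eta> \<zeta>))"

text \<open>sum_i h_i wedge (d r / d lambda^i) at lambda, as a trilinear form.\<close>
definition dyn_term ::
  "('l::finite \<Rightarrow> real^'n) \<Rightarrow> (real^'l \<Rightarrow> real^'n^'n) \<Rightarrow> real^'l \<Rightarrow> real^'n \<Rightarrow> real^'n \<Rightarrow> real^'n \<Rightarrow> real" where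
  "dyn_term hb r lam \<xi> \<eta> \<zeta> = (\<Sum>i\<in>UNIV. \<Sum>a\<in>UNIV. \<Sum>b\<in>UNIV.
     (1/2) * (frechet_derivative r (at lam) (axis i 1))$a$b * w3 (hb i) (axis a 1) (axis b 1) \<xi> \<eta> \<zeta>)"

definition triangular_dyn_rmatrix ::
  "(real^'n \<Rightarrow> real^'n \<Rightarrow> real^'n) \<Rightarrow> ('l::finite \<Rightarrow> real^'n) \<Rightarrow> (real^'l \<Rightarrow> real^'n^'n) \<Rightarrow> bool" where
  "triangular_dyn_rmatrix br hb r \<longleftrightarrow> smooth_map r \<and> (\<forall>lam. is_bivector (r lam)) \<and>
     (\<forall>lam. \<forall>h\<in>span (range hb). ad_biv br h (r lam) = 0) \<and>
     (\<forall>lam \<xi> \<eta> \<zeta>. dyn_term hb r lam \<xi> \<eta> \<zeta> + (1/2) * schouten2 br (r lam) (r lam) \<xi> \<eta> \<zeta> = 0)"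

definition h_perp :: "('l \<Rightarrow> real^'n) \<Rightarrow> (real^'n) set" where
  "h_perp hb = {\<xi>. \<forall>i. \<xi> \<bullet> hb i = 0}"

definition istar :: "('l::finite \<Rightarrow> real^'n) \<Rightarrow> real^'n \<Rightarrow> real^'l" where
  "istar hb \<xi> = (\<chi> i. \<xi> \<bullet> hb i)"

definition g_lambda :: "('l \<Rightarrow> real^'n) \<Rightarrow> (real^'l \<Rightarrow> real^'n^'n) \<Rightarrow> real^'l \<Rightarrow> (real^'n) set" where
  "g_lambda hb r lam = {x + y | x y. x \<in> span (range hb) \<and> y \<in> sharp (r lam) ` h_perp hb}"

text \<open>Lambda^# at lambda: A*_lambda = h (+) g* \<rightarrow> A_lambda = h* (+) g.\<close>
definition Lambda_sharp ::
  "('l::finite \<Rightarrow> real^'n) \<Rightarrow> (real^'l \<Rightarrow> real^'n^'n) \<Rightarrow> real^'l \<Rightarrow> (real^'l) \<times> (real^'n) \<Rightarrow> (real^'l) \<times> (real^'n)" where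
  "Lambda_sharp hb r lam = (\<lambda>(c, \<xi>). (istar hb \<xi>, - (\<Sum>i\<in>UNIV. c$i *\<^sub>R hb i) + sharp (r lam) \<xi>))"

text \<open>The bivector pi at a point (lambda, x) of M = h* x G, written in the
left-invariant trivialisation T*_(lambda,x) M = h (+) g* (it does not depend on x):
pi = sum_i h_i wedge d/d lambda^i + r(lambda).\<close>
definition pi_form ::
  "('l::finite \<Rightarrow> real^'n) \<Rightarrow> (real^'l \<Rightarrow> real^'n^'n) \<Rightarrow> real^'l \<Rightarrow> (real^'l) \<times> (real^'n) \<Rightarrow> (real^'l) \<times> (real^'n) \<Rightarrow> real" where
  "pi_form hb r lam \<alpha> \<beta> = (case \<alpha> of (c, \<xi>) \<Rightarrow> case \<beta> of (c', \<xi>') \<Rightarrow>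
     (\<Sum>i\<in>UNIV. (\<xi> \<bullet> hb i) * c'$i - c$i * (\<xi>' \<bullet> hb i)) + biv_eval (r lam) \<xi> \<xi>')"

definition symplectic_pi :: "('l::finite \<Rightarrow> real^'n) \<Rightarrow> (real^'l \<Rightarrow> real^'n^'n) \<Rightarrow> bool" where
  "symplectic_pi hb r \<longleftrightarrow> (\<forall>lam \<alpha>. (\<forall>\<beta>. pi_form hb r lam \<alpha> \<beta> = 0) \<longrightarrow> \<alpha> = 0)"

end

theory Submission
  imports Defs
begin

lemma inner_axis1: "(x::real^'n) \<bullet> axis a 1 = x $ a"
  by (simp add: inner_axis)

lemma vec_expand: "(x::real^'n) = (\<Sum>a\<in>UNIV. (x $ a) *\<^sub>R axis a 1)"
  using basis_expansion[of x] by (simp add: scalar_mult_eq_scaleR)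

lemma sharp_inner: "sharp \<rho> \<xi> \<bullet> \<eta> = biv_eval \<rho> \<xi> \<eta>"
proof -
  have "sharp \<rho> \<xi> \<bullet> \<eta> = (\<Sum>b\<in>UNIV. (\<Sum>a\<in>UNIV. \<rho>$a$b * \<xi>$a) * \<eta>$b)"
    unfolding sharp_def inner_vec_def
    by (simp add: matrix_vector_mult_def transpose_def)
  also have "\<dots> = (\<Sum>b\<in>UNIV. \<Sum>a\<in>UNIV. \<rho>$a$b * \<xi>$a * \<eta>$b)"
    by (simp add: sum_distrib_right)
  also have "\<dots> = biv_eval \<rho> \<xi> \<eta>"
    unfolding biv_eval_def by (rule sum.swap)
  finally show ?thesis .
qed

lemma linear_sharp: "linear (sharp \<rho>)"
  unfolding sharp_def by (rule matrix_vector_mul_linear)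

lemma sharp_add: "sharp \<rho> (x + y) = sharp \<rho> x + sharp \<rho> y"
  and sharp_scale: "sharp \<rho> (c *\<^sub>R x) = c *\<^sub>R sharp \<rho> x"
  and sharp_sum: "sharp \<rho> (sum f S) = (\<Sum>i\<in>S. sharp \<rho> (f i))"
  and sharp_diff: "sharp \<rho> (x - y) = sharp \<rho> x - sharp \<rho> y"
  and sharp_zero: "sharp \<rho> 0 = 0"
  using linear_sharp[of \<rho>] by (auto simp: linear_add linear_scale linear_sum linear_diff linear_0)

lemma sharp_antisym:
  assumes "is_bivector \<rho>"
  shows "sharp \<rho> \<xi> \<bullet> \<eta> = - (sharp \<rho> \<eta> \<bullet> \<xi>)"
proof -
  have t: "\<And>a b. \<rho>$a$b = - \<rho>$b$a"
    using assms unfolding is_bivector_def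
    by (metis (no_types, lifting) minus_minus transpose_def vec_lambda_beta vector_uminus_component)
  have "biv_eval \<rho> \<xi> \<eta> = - biv_eval \<rho> \<eta> \<xi>"
  proof -
    have "biv_eval \<rho> \<eta> \<xi> = (\<Sum>b\<in>UNIV. \<Sum>a\<in>UNIV. \<rho>$b$a * \<eta>$b * \<xi>$a)"
      unfolding biv_eval_def ..
    also have "\<dots> = (\<Sum>a\<in>UNIV. \<Sum>b\<in>UNIV. \<rho>$b$a * \<eta>$b * \<xi>$a)"
      by (rule sum.swap)
    also have "\<dots> = (\<Sum>a\<in>UNIV. \<Sum>b\<in>UNIV. - (\<rho>$a$b * \<xi>$a * \<eta>$b))"
      by (intro sum.cong refl) (subst t, simp)
    also have "\<dots> = - biv_eval \<rho> \<xi> \<eta>"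
      unfolding biv_eval_def by (simp add: sum_negf)
    finally show ?thesis by simp
  qed
  then show ?thesis by (simp add: sharp_inner)
qed

lemma sharp_self: "is_bivector \<rho> \<Longrightarrow> sharp \<rho> \<xi> \<bullet> \<xi> = 0"
  using sharp_antisym[of \<rho> \<xi> \<xi>] by simp

definition Kx :: "(real^'n \<Rightarrow> real^'n \<Rightarrow> real^'n) \<Rightarrow> real^'n \<Rightarrow> real^'n \<Rightarrow> real^'n" where
  "Kx br x \<xi> = (\<chi> a. \<xi> \<bullet> br x (axis a 1))"

lemma Kx_inner:
  assumes "linear (br x)"
  shows "Kx br x \<xi> \<bullet> y = \<xi> \<bullet> br x y"
proof -
  have "br x y = (\<Sum>a\<in>UNIV. (y $ a) *\<^sub>R br x (axis a 1))"
    by (subst vec_expand[of y]) (simp add: linear_sum[OF assms] linear_scale[OF assms])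
  then have "\<xi> \<bullet> br x y = (\<Sum>a\<in>UNIV. (y $ a) * (\<xi> \<bullet> br x (axis a 1)))"
    by (simp add: inner_sum_right)
  moreover have "Kx br x \<xi> \<bullet> y = (\<Sum>a\<in>UNIV. (\<xi> \<bullet> br x (axis a 1)) * y $ a)"
    unfolding Kx_def by (simp add: inner_vec_def)
  ultimately show ?thesis by (simp add: mult.commute)
qed

lemma sharp_apply: "sharp Q \<alpha> $ q = (\<Sum>p\<in>UNIV. Q$p$q * \<alpha>$p)"
  unfolding sharp_def by (simp add: matrix_vector_mult_def transpose_def mult.commute)

lemma lin_expand:
  assumes "linear f"
  shows "f x = (\<Sum>a\<in>UNIV. (x $ a) *\<^sub>R f (axis a 1))"
  by (subst vec_expand[of x]) (simp add: linear_sum[OF assms] linear_scale[OF assms])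

lemma sharp_ad_biv:
  assumes "linear (br h)"
  shows "sharp (ad_biv br h \<rho>) \<alpha> = sharp \<rho> (Kx br h \<alpha>) + br h (sharp \<rho> \<alpha>)"
proof (subst vec_eq_iff, intro allI)
  fix q
  have e1: "(\<Sum>p\<in>UNIV. (\<Sum>a\<in>UNIV. \<rho>$a$q * (br h (axis a 1))$p) * \<alpha>$p)
      = (\<Sum>a\<in>UNIV. \<rho>$a$q * (Kx br h \<alpha>)$a)"
  proof -
    have "(\<Sum>p\<in>UNIV. (\<Sum>a\<in>UNIV. \<rho>$a$q * (br h (axis a 1))$p) * \<alpha>$p)
        = (\<Sum>p\<in>UNIV. \<Sum>a\<in>UNIV. \<rho>$a$q * ((br h (axis a 1))$p * \<alpha>$p))"
      by (simp add: sum_distrib_right mult.assoc)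
    also have "\<dots> = (\<Sum>a\<in>UNIV. \<Sum>p\<in>UNIV. \<rho>$a$q * ((br h (axis a 1))$p * \<alpha>$p))"
      by (rule sum.swap)
    also have "\<dots> = (\<Sum>a\<in>UNIV. \<rho>$a$q * (Kx br h \<alpha>)$a)"
      by (simp add: Kx_def inner_vec_def sum_distrib_left mult.commute)
    finally show ?thesis .
  qed
  have e2: "(\<Sum>p\<in>UNIV. (\<Sum>b\<in>UNIV. \<rho>$p$b * (br h (axis b 1))$q) * \<alpha>$p)
      = (br h (sharp \<rho> \<alpha>))$q"
  proof -
    have "(\<Sum>p\<in>UNIV. (\<Sum>b\<in>UNIV. \<rho>$p$b * (br h (axis b 1))$q) * \<alpha>$p)
        = (\<Sum>p\<in>UNIV. \<Sum>b\<in>UNIV. (\<rho>$p$b * \<alpha>$p) * (br h (axis b 1))$q)"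
      by (simp add: sum_distrib_right mult.commute mult.left_commute sum_distrib_left)
    also have "\<dots> = (\<Sum>b\<in>UNIV. \<Sum>p\<in>UNIV. (\<rho>$p$b * \<alpha>$p) * (br h (axis b 1))$q)"
      by (rule sum.swap)
    also have "\<dots> = (\<Sum>b\<in>UNIV. (sharp \<rho> \<alpha> $ b) * (br h (axis b 1))$q)"
      by (simp add: sharp_apply sum_distrib_right)
    also have "\<dots> = (br h (sharp \<rho> \<alpha>))$q"
      by (subst lin_expand[OF assms, of "sharp \<rho> \<alpha>"]) (simp add: sum_component)
    finally show ?thesis .
  qed
  show "sharp (ad_biv br h \<rho>) \<alpha> $ q = (sharp \<rho> (Kx br h \<alpha>) + br h (sharp \<rho> \<alpha>)) $ q"
    unfolding sharp_apply[of "ad_biv br h \<rho>"] 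
    by (simp add: ad_biv_def distrib_right sum.distrib e1 e2 sharp_apply)
qed

locale trd =
  fixes br :: "real^'n \<Rightarrow> real^'n \<Rightarrow> real^'n"
    and hb :: "'l::finite \<Rightarrow> real^'n"
    and r :: "real^'l \<Rightarrow> real^'n^'n"
  assumes lie: "lie_algebra br"
    and abl: "abelian_subalg_basis br hb"
    and trm: "triangular_dyn_rmatrix br hb r"
begin

lemma bil: "bilinear br" using lie unfolding lie_algebra_def by blast
lemma lin_r: "linear (br x)" using bil unfolding bilinear_def by blast
lemma lin_l: "linear (\<lambda>x. br x y)" using bil unfolding bilinear_def by blast

lemma br_anti: "br x y = - br y x"
proof -
  have z: "\<And>x. br x x = 0" using lie unfolding lie_algebra_def by blast
  have "0 = br (x + y) (x + y)" using z by simp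
  also have "\<dots> = br x x + br x y + br y x + br y y"
    using linear_add[OF lin_r] linear_add[OF lin_l] by (simp add: algebra_simps)
  finally show ?thesis using z by (simp add: eq_neg_iff_add_eq_0 add.commute)
qed

lemma br_span: "x \<in> span (range hb) \<Longrightarrow> y \<in> span (range hb) \<Longrightarrow> br x y = 0"
  using abl unfolding abelian_subalg_basis_def by blast

lemma hb_span: "hb i \<in> span (range hb)" by (simp add: span_base)

lemma br_hh: "br (hb i) (hb j) = 0" using br_span hb_span by blast

lemma biv: "is_bivector (r lam)" using trm unfolding triangular_dyn_rmatrix_def by blast

lemma inv0: "h \<in> span (range hb) \<Longrightarrow> ad_biv br h (r lam) = 0"
  using trm unfolding triangular_dyn_rmatrix_def by blast

lemma dcybe: "dyn_term hb r lam \<xi> \<eta> \<zeta> + (1/2) * schouten2 br (r lam) (r lam) \<xi> \<eta> \<zeta> = 0"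
  using trm unfolding triangular_dyn_rmatrix_def by blast

lemma smooth: "smooth_map r" using trm unfolding triangular_dyn_rmatrix_def by blast

abbreviation rr where "rr lam \<xi> \<eta> \<equiv> sharp (r lam) \<xi> \<bullet> \<eta>"

lemma rr_anti: "rr lam \<xi> \<eta> = - rr lam \<eta> \<xi>"
  using sharp_antisym[OF biv] by blast

lemma invariance:
  assumes "h \<in> span (range hb)"
  shows "rr lam (Kx br h \<alpha>) \<beta> + rr lam \<alpha> (Kx br h \<beta>) = 0"
proof -
  have "0 = sharp (ad_biv br h (r lam)) \<alpha> \<bullet> \<beta>" using inv0[OF assms] by (simp add: sharp_def)
  also have "\<dots> = rr lam (Kx br h \<alpha>) \<beta> + br h (sharp (r lam) \<alpha>) \<bullet> \<beta>"
    by (simp add: sharp_ad_biv[OF lin_r] inner_add_left)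
  also have "br h (sharp (r lam) \<alpha>) \<bullet> \<beta> = rr lam \<alpha> (Kx br h \<beta>)"
    using Kx_inner[where br=br and x=h and \<xi>=\<beta> and y="sharp (r lam) \<alpha>", OF lin_r] by (simp add: inner_commute)
  finally show ?thesis by simp
qed

end


lemma linear_transpose: "linear (transpose :: real^'n^'m \<Rightarrow> real^'m^'n)"
  by (rule linearI) (simp_all add: vec_eq_iff transpose_def)

lemma linear_biv_eval: "linear (\<lambda>\<rho>. biv_eval \<rho> \<xi> \<eta>)"
  by (rule linearI) (simp_all add: biv_eval_def algebra_simps sum.distrib sum_distrib_left)

lemma w3_lin2: "linear (\<lambda>y. w3 x y z \<xi> \<eta> \<zeta>)"
  by (rule linearI) (simp_all add: w3_def inner_add_right algebra_simps)

lemma w3_lin3: "linear (\<lambda>z. w3 x y z \<xi> \<eta> \<zeta>)"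
  by (rule linearI) (simp_all add: w3_def inner_add_right algebra_simps)

context trd begin

definition th :: "'l \<Rightarrow> real^'n" where
  "th k = (SOME t. \<forall>i. t \<bullet> hb i = (if i = k then 1 else 0))"

lemma th_ex: "\<exists>t. \<forall>i. t \<bullet> hb i = (if i = k then 1 else (0::real))"
proof -
  have ind: "independent (range hb)" and inj: "inj hb"
    using abl unfolding abelian_subalg_basis_def by auto
  obtain g :: "real^'n \<Rightarrow> real" where g: "linear g" "\<forall>x\<in>range hb. g x = (if x = hb k then 1 else 0)"
    using linear_independent_extend[OF ind, of "\<lambda>x. if x = hb k then 1 else (0::real)"] by blast
  define t where "t = (\<chi> a. g (axis a 1))"
  have tx: "t \<bullet> x = g x" for x
    using lin_expand[OF g(1), of x] unfolding t_def inner_vec_def by (simp add: mult.commute)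
  show ?thesis
    by (rule exI[of _ t]) (use g(2) inj in \<open>auto simp: tx inj_eq\<close>)
qed

lemma th_h: "th k \<bullet> hb i = (if i = k then 1 else 0)"
  using someI_ex[OF th_ex[of k]] unfolding th_def by blast

lemma h_th: "hb i \<bullet> th k = (if i = k then 1 else 0)"
  using th_h by (simp add: inner_commute)

definition perp :: "real^'n \<Rightarrow> bool" where "perp \<xi> \<longleftrightarrow> (\<forall>i. \<xi> \<bullet> hb i = 0)"

lemma h_perp_iff: "\<xi> \<in> h_perp hb \<longleftrightarrow> perp \<xi>"
  unfolding h_perp_def perp_def by simp

definition Pj :: "real^'n \<Rightarrow> real^'n" where
  "Pj \<xi> = \<xi> - (\<Sum>k\<in>UNIV. (\<xi> \<bullet> hb k) *\<^sub>R th k)"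

lemma Pj_perp: "perp (Pj \<xi>)"
  unfolding perp_def Pj_def
  by (simp add: inner_diff_left inner_sum_left th_h if_distrib cong: if_cong)

lemma Pj_fix: "perp \<xi> \<Longrightarrow> Pj \<xi> = \<xi>"
  unfolding perp_def Pj_def by simp

lemma Pj_lin: "linear Pj"
  unfolding Pj_def
  by (rule linearI) (simp_all add: inner_add_left scaleR_add_left sum.distrib scaleR_sum_right algebra_simps)

lemma decomp: "\<xi> = Pj \<xi> + (\<Sum>k\<in>UNIV. (\<xi> \<bullet> hb k) *\<^sub>R th k)"
  unfolding Pj_def by simp

lemma span_orth:
  assumes "x \<in> span (range hb)" "perp \<eta>"
  shows "\<eta> \<bullet> x = 0"
proof -
  have "x \<in> {x. \<eta> \<bullet> x = 0}"
    by (rule span_induct[OF assms(1)]) (use assms(2) in \<open>auto simp: perp_def subspace_hyperplane\<close>)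
  then show ?thesis by simp
qed

lemma comb_span: "(\<Sum>k\<in>UNIV. c k *\<^sub>R hb k) \<in> span (range hb)"
  by (intro span_sum span_scale span_base) auto

lemma comb_zero: "(\<Sum>k\<in>UNIV. c k *\<^sub>R hb k) = 0 \<Longrightarrow> c m = 0"
proof -
  assume "(\<Sum>k\<in>UNIV. c k *\<^sub>R hb k) = 0"
  then have "th m \<bullet> (\<Sum>k\<in>UNIV. c k *\<^sub>R hb k) = 0" by simp
  then show "c m = 0" by (simp add: inner_sum_right th_h if_distrib cong: if_cong)
qed

lemma orth_perp:
  assumes "\<And>\<xi>. perp \<xi> \<Longrightarrow> w \<bullet> \<xi> = 0"
  shows "w = (\<Sum>k\<in>UNIV. (w \<bullet> th k) *\<^sub>R hb k)"
proof -
  define w' where "w' = w - (\<Sum>k\<in>UNIV. (w \<bullet> th k) *\<^sub>R hb k)"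
  have a: "w' \<bullet> Pj \<zeta> = 0" for \<zeta>
  proof -
    have "(\<Sum>k\<in>UNIV. (w \<bullet> th k) *\<^sub>R hb k) \<bullet> Pj \<zeta> = 0"
      using span_orth[OF comb_span Pj_perp] by (simp add: inner_commute)
    then show ?thesis using assms[OF Pj_perp] by (simp add: w'_def inner_diff_left)
  qed
  have b: "w' \<bullet> th m = 0" for m
    by (simp add: w'_def inner_diff_left inner_sum_left h_th if_distrib cong: if_cong)
  have "w' \<bullet> \<zeta> = 0" for \<zeta>
    by (subst decomp[of \<zeta>]) (simp add: inner_add_right inner_sum_right a b)
  then have "w' = 0" by (metis inner_eq_zero_iff)
  then show ?thesis by (simp add: w'_def)
qed

end

context trd begin

lemma G_closed:
  "(\<Sum>a\<in>UNIV. \<Sum>c\<in>UNIV. (\<alpha> \<bullet> br (axis a 1) (axis c 1)) * (\<beta> \<bullet> \<rho>$a) * (\<gamma> \<bullet> \<rho>$c))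
   = \<alpha> \<bullet> br (\<rho> *v \<beta>) (\<rho> *v \<gamma>)"
proof -
  have comp: "(\<rho> *v x) $ a = \<rho>$a \<bullet> x" for x a
    by (simp add: matrix_vector_mult_def inner_vec_def)
  have "br (\<rho> *v \<beta>) (\<rho> *v \<gamma>) = (\<Sum>a\<in>UNIV. (\<rho> *v \<beta>)$a *\<^sub>R br (axis a 1) (\<rho> *v \<gamma>))"
    by (rule lin_expand[OF lin_l])
  also have "\<dots> = (\<Sum>a\<in>UNIV. (\<rho> *v \<beta>)$a *\<^sub>R (\<Sum>c\<in>UNIV. (\<rho> *v \<gamma>)$c *\<^sub>R br (axis a 1) (axis c 1)))"
    by (subst lin_expand[OF lin_r]) (rule refl)
  finally have "\<alpha> \<bullet> br (\<rho> *v \<beta>) (\<rho> *v \<gamma>) =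
     (\<Sum>a\<in>UNIV. (\<rho> *v \<beta>)$a * (\<Sum>c\<in>UNIV. (\<rho> *v \<gamma>)$c * (\<alpha> \<bullet> br (axis a 1) (axis c 1))))"
    by (simp add: inner_sum_right)
  then show ?thesis
    by (simp add: comp sum_distrib_left inner_commute mult.commute mult.left_commute)
qed

lemma mv_sharp: "is_bivector \<rho> \<Longrightarrow> \<rho> *v x = - sharp \<rho> x"
  unfolding sharp_def is_bivector_def by (simp add: vec_eq_iff matrix_vector_mult_def sum_negf)

lemma br_neg: "br (- x) (- y) = br x y"
  using linear_neg[OF lin_r] linear_neg[OF lin_l] by simp

definition H :: "real^'n^'n \<Rightarrow> real^'n \<Rightarrow> real^'n \<Rightarrow> real^'n \<Rightarrow> real" where
  "H \<rho> \<alpha> \<beta> \<gamma> = \<alpha> \<bullet> br (sharp \<rho> \<beta>) (sharp \<rho> \<gamma>)"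

lemma H_anti: "H \<rho> \<alpha> \<gamma> \<beta> = - H \<rho> \<alpha> \<beta> \<gamma>"
  unfolding H_def by (subst br_anti) simp

lemma schouten_S1:
  assumes b: "is_bivector \<rho>"
  shows "schouten2 br \<rho> \<rho> \<xi> \<eta> \<zeta> =
    (\<Sum>a\<in>UNIV. \<Sum>b\<in>UNIV. \<Sum>c\<in>UNIV. \<Sum>d\<in>UNIV. \<rho>$a$b * \<rho>$c$d *
        w3 (br (axis a 1) (axis c 1)) (axis b 1) (axis d 1) \<xi> \<eta> \<zeta>)"
    (is "_ = ?S1")
proof -
  let ?S2 = "(\<Sum>a\<in>UNIV. \<Sum>b\<in>UNIV. \<Sum>c\<in>UNIV. \<Sum>d\<in>UNIV. \<rho>$a$b * \<rho>$c$d *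
        w3 (br (axis a 1) (axis d 1)) (axis b 1) (axis c 1) \<xi> \<eta> \<zeta>)"
  let ?S3 = "(\<Sum>a\<in>UNIV. \<Sum>b\<in>UNIV. \<Sum>c\<in>UNIV. \<Sum>d\<in>UNIV. \<rho>$a$b * \<rho>$c$d *
        w3 (br (axis b 1) (axis c 1)) (axis a 1) (axis d 1) \<xi> \<eta> \<zeta>)"
  let ?S4 = "(\<Sum>a\<in>UNIV. \<Sum>b\<in>UNIV. \<Sum>c\<in>UNIV. \<Sum>d\<in>UNIV. \<rho>$a$b * \<rho>$c$d *
        w3 (br (axis b 1) (axis d 1)) (axis a 1) (axis c 1) \<xi> \<eta> \<zeta>)"
  have tr: "transpose \<rho> = - \<rho>" using b unfolding is_bivector_def .
  have e0: "schouten2 br \<rho> \<rho> \<xi> \<eta> \<zeta> = (1/4) * (?S1 - ?S2 - ?S3 + ?S4)"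
    unfolding schouten2_def by (simp add: sum_subtractf sum.distrib sum_distrib_left algebra_simps)
  have e2: "?S2 = (\<Sum>a\<in>UNIV. \<Sum>b\<in>UNIV. \<Sum>c\<in>UNIV. \<Sum>d\<in>UNIV. \<rho>$a$b * (transpose \<rho>)$c$d *
        w3 (br (axis a 1) (axis c 1)) (axis b 1) (axis d 1) \<xi> \<eta> \<zeta>)"
    unfolding transpose_def vec_lambda_beta
    apply (rule sum.cong[OF refl], rule sum.cong[OF refl])
    by (rule sum.swap)
  have e3: "?S3 = (\<Sum>a\<in>UNIV. \<Sum>b\<in>UNIV. \<Sum>c\<in>UNIV. \<Sum>d\<in>UNIV. (transpose \<rho>)$a$b * \<rho>$c$d *
        w3 (br (axis a 1) (axis c 1)) (axis b 1) (axis d 1) \<xi> \<eta> \<zeta>)"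
    unfolding transpose_def vec_lambda_beta
    by (rule sum.swap)
  have e4: "?S4 = (\<Sum>a\<in>UNIV. \<Sum>b\<in>UNIV. \<Sum>c\<in>UNIV. \<Sum>d\<in>UNIV. (transpose \<rho>)$a$b * (transpose \<rho>)$c$d *
        w3 (br (axis a 1) (axis c 1)) (axis b 1) (axis d 1) \<xi> \<eta> \<zeta>)"
  proof -
    have "?S4 = (\<Sum>b\<in>UNIV. \<Sum>a\<in>UNIV. \<Sum>c\<in>UNIV. \<Sum>d\<in>UNIV. \<rho>$a$b * \<rho>$c$d *
        w3 (br (axis b 1) (axis d 1)) (axis a 1) (axis c 1) \<xi> \<eta> \<zeta>)"
      by (rule sum.swap)
    also have "\<dots> = (\<Sum>b\<in>UNIV. \<Sum>a\<in>UNIV. \<Sum>d\<in>UNIV. \<Sum>c\<in>UNIV. \<rho>$a$b * \<rho>$c$d *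
        w3 (br (axis b 1) (axis d 1)) (axis a 1) (axis c 1) \<xi> \<eta> \<zeta>)"
      apply (rule sum.cong[OF refl], rule sum.cong[OF refl])
      by (rule sum.swap)
    finally show ?thesis unfolding transpose_def vec_lambda_beta .
  qed
  have "?S2 = - ?S1" unfolding e2 tr by (simp add: sum_negf)
  moreover have "?S3 = - ?S1" unfolding e3 tr by (simp add: sum_negf)
  moreover have "?S4 = ?S1" unfolding e4 tr by simp
  ultimately show ?thesis using e0 by simp
qed


lemma S1_red:
  "(\<Sum>a\<in>UNIV. \<Sum>b\<in>UNIV. \<Sum>c\<in>UNIV. \<Sum>d\<in>UNIV. \<rho>$a$b * \<rho>$c$d *
        w3 (br (axis a 1) (axis c 1)) (axis b 1) (axis d 1) \<xi> \<eta> \<zeta>)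
   = (\<Sum>a\<in>UNIV. \<Sum>c\<in>UNIV. w3 (br (axis a 1) (axis c 1)) (\<rho>$a) (\<rho>$c) \<xi> \<eta> \<zeta>)"
proof -
  have "(\<Sum>a\<in>UNIV. \<Sum>b\<in>UNIV. \<Sum>c\<in>UNIV. \<Sum>d\<in>UNIV. \<rho>$a$b * \<rho>$c$d *
        w3 (br (axis a 1) (axis c 1)) (axis b 1) (axis d 1) \<xi> \<eta> \<zeta>)
     = (\<Sum>a\<in>UNIV. \<Sum>c\<in>UNIV. \<Sum>b\<in>UNIV. \<Sum>d\<in>UNIV. \<rho>$a$b * \<rho>$c$d *
        w3 (br (axis a 1) (axis c 1)) (axis b 1) (axis d 1) \<xi> \<eta> \<zeta>)"
    apply (rule sum.cong[OF refl])
    by (rule sum.swap)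
  also have "\<dots> = (\<Sum>a\<in>UNIV. \<Sum>c\<in>UNIV. w3 (br (axis a 1) (axis c 1)) (\<rho>$a) (\<rho>$c) \<xi> \<eta> \<zeta>)"
  proof (rule sum.cong[OF refl], rule sum.cong[OF refl])
    fix a c
    let ?X = "br (axis a 1) (axis c 1)"
    have i: "(\<Sum>d\<in>UNIV. \<rho>$c$d * w3 ?X y (axis d 1) \<xi> \<eta> \<zeta>) = w3 ?X y (\<rho>$c) \<xi> \<eta> \<zeta>" for y
      using lin_expand[OF w3_lin3[where x="?X" and y=y and \<xi>=\<xi> and \<eta>=\<eta> and \<zeta>=\<zeta>], of "\<rho>$c"] by simp
    have o: "(\<Sum>b\<in>UNIV. \<rho>$a$b * w3 ?X (axis b 1) z \<xi> \<eta> \<zeta>) = w3 ?X (\<rho>$a) z \<xi> \<eta> \<zeta>" for z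
      using lin_expand[OF w3_lin2[where x="?X" and z=z and \<xi>=\<xi> and \<eta>=\<eta> and \<zeta>=\<zeta>], of "\<rho>$a"] by simp
    have "(\<Sum>b\<in>UNIV. \<Sum>d\<in>UNIV. \<rho>$a$b * \<rho>$c$d * w3 ?X (axis b 1) (axis d 1) \<xi> \<eta> \<zeta>)
        = (\<Sum>b\<in>UNIV. \<rho>$a$b * (\<Sum>d\<in>UNIV. \<rho>$c$d * w3 ?X (axis b 1) (axis d 1) \<xi> \<eta> \<zeta>))"
      by (simp add: sum_distrib_left mult.assoc)
    also have "\<dots> = w3 ?X (\<rho>$a) (\<rho>$c) \<xi> \<eta> \<zeta>" by (simp add: i o)
    finally show "(\<Sum>b\<in>UNIV. \<Sum>d\<in>UNIV. \<rho>$a$b * \<rho>$c$d * w3 ?X (axis b 1) (axis d 1) \<xi> \<eta> \<zeta>)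
        = w3 ?X (\<rho>$a) (\<rho>$c) \<xi> \<eta> \<zeta>" .
  qed
  finally show ?thesis .
qed

definition G :: "real^'n^'n \<Rightarrow> real^'n \<Rightarrow> real^'n \<Rightarrow> real^'n \<Rightarrow> real" where
  "G \<rho> \<alpha> \<beta> \<gamma> = (\<Sum>a\<in>UNIV. \<Sum>c\<in>UNIV. (\<alpha> \<bullet> br (axis a 1) (axis c 1)) * (\<beta> \<bullet> \<rho>$a) * (\<gamma> \<bullet> \<rho>$c))"

lemma SS_G:
  "(\<Sum>a\<in>UNIV. \<Sum>c\<in>UNIV. w3 (br (axis a 1) (axis c 1)) (\<rho>$a) (\<rho>$c) \<xi> \<eta> \<zeta>)
   = G \<rho> \<xi> \<eta> \<zeta> - G \<rho> \<xi> \<zeta> \<eta> - G \<rho> \<eta> \<xi> \<zeta> + G \<rho> \<zeta> \<xi> \<eta> + G \<rho> \<eta> \<zeta> \<xi> - G \<rho> \<zeta> \<eta> \<xi>"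
proof -
  have "(\<Sum>a\<in>UNIV. \<Sum>c\<in>UNIV. w3 (br (axis a 1) (axis c 1)) (\<rho>$a) (\<rho>$c) \<xi> \<eta> \<zeta>)
    - (G \<rho> \<xi> \<eta> \<zeta> - G \<rho> \<xi> \<zeta> \<eta> - G \<rho> \<eta> \<xi> \<zeta> + G \<rho> \<zeta> \<xi> \<eta> + G \<rho> \<eta> \<zeta> \<xi> - G \<rho> \<zeta> \<eta> \<xi>)
    = (\<Sum>a\<in>UNIV. \<Sum>c\<in>UNIV. w3 (br (axis a 1) (axis c 1)) (\<rho>$a) (\<rho>$c) \<xi> \<eta> \<zeta>
       - ((\<xi> \<bullet> br (axis a 1) (axis c 1)) * (\<eta> \<bullet> \<rho>$a) * (\<zeta> \<bullet> \<rho>$c)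
        - (\<xi> \<bullet> br (axis a 1) (axis c 1)) * (\<zeta> \<bullet> \<rho>$a) * (\<eta> \<bullet> \<rho>$c)
        - (\<eta> \<bullet> br (axis a 1) (axis c 1)) * (\<xi> \<bullet> \<rho>$a) * (\<zeta> \<bullet> \<rho>$c)
        + (\<zeta> \<bullet> br (axis a 1) (axis c 1)) * (\<xi> \<bullet> \<rho>$a) * (\<eta> \<bullet> \<rho>$c)
        + (\<eta> \<bullet> br (axis a 1) (axis c 1)) * (\<zeta> \<bullet> \<rho>$a) * (\<xi> \<bullet> \<rho>$c)
        - (\<zeta> \<bullet> br (axis a 1) (axis c 1)) * (\<eta> \<bullet> \<rho>$a) * (\<xi> \<bullet> \<rho>$c)))"
    unfolding G_def by (simp add: sum_subtractf sum.distrib)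
  also have "\<dots> = 0"
    by (intro sum.neutral ballI) (simp add: w3_def algebra_simps inner_commute)
  finally show ?thesis by simp
qed

lemma half_schouten:
  assumes b: "is_bivector \<rho>"
  shows "(1/2) * schouten2 br \<rho> \<rho> \<xi> \<eta> \<zeta> = H \<rho> \<xi> \<eta> \<zeta> + H \<rho> \<eta> \<zeta> \<xi> + H \<rho> \<zeta> \<xi> \<eta>"
proof -
  have GH: "G \<rho> \<alpha> \<beta> \<gamma> = H \<rho> \<alpha> \<beta> \<gamma>" for \<alpha> \<beta> \<gamma>
    unfolding G_def G_closed H_def mv_sharp[OF b] br_neg ..
  show ?thesis
    unfolding schouten_S1[OF b] S1_red SS_G GH
    using H_anti[of \<rho> \<xi> \<eta> \<zeta>] H_anti[of \<rho> \<eta> \<zeta> \<xi>] H_anti[of \<rho> \<zeta> \<xi> \<eta>] by simp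
qed

end

context trd begin

definition Dr :: "real^'l \<Rightarrow> real^'l \<Rightarrow> real^'n^'n" where
  "Dr lam = frechet_derivative r (at lam)"

lemma smooth_F: "\<exists>F :: 'l list \<Rightarrow> real^'l \<Rightarrow> real^'n^'n. F [] = r \<and>
     (\<forall>ks. continuous_on UNIV (F ks)) \<and>
     (\<forall>ks x. (F ks has_derivative (\<lambda>v. \<Sum>i\<in>UNIV. (v $ i) *\<^sub>R F (i # ks) x)) (at x))"
  using smooth unfolding smooth_map_def by blast

lemma r_cont: "continuous_on UNIV r"
  using smooth_F by metis

lemma r_deriv: "(r has_derivative Dr lam) (at lam)"
proof -
  obtain F :: "'l list \<Rightarrow> real^'l \<Rightarrow> real^'n^'n" where F: "F [] = r"
    "\<And>ks x. (F ks has_derivative (\<lambda>v. \<Sum>i\<in>UNIV. (v $ i) *\<^sub>R F (i # ks) x)) (at x)"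
    using smooth_F by blast
  have "r differentiable (at lam)"
    using F(2)[of "[]" lam] F(1) unfolding differentiable_def by auto
  then show ?thesis unfolding Dr_def by (simp add: frechet_derivative_works)
qed

lemma Dr_lin: "linear (Dr lam)"
  using has_derivative_linear[OF r_deriv] .

lemma Dr_biv: "is_bivector (Dr lam v)"
proof -
  have bl: "bounded_linear (transpose :: real^'n^'n \<Rightarrow> real^'n^'n)"
    using linear_transpose linear_conv_bounded_linear by blast
  have 1: "((\<lambda>x. transpose (r x)) has_derivative (\<lambda>v. transpose (Dr lam v))) (at lam)"
    by (rule bounded_linear.has_derivative[OF bl r_deriv])
  have eq: "(\<lambda>x. transpose (r x)) = (\<lambda>x. - r x)"
    using biv unfolding is_bivector_def by auto
  have 2: "((\<lambda>x. transpose (r x)) has_derivative (\<lambda>v. - Dr lam v)) (at lam)"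
    unfolding eq by (rule has_derivative_minus[OF r_deriv])
  have "(\<lambda>v. transpose (Dr lam v)) = (\<lambda>v. - Dr lam v)"
    by (rule has_derivative_unique[OF 1 2])
  then show ?thesis unfolding is_bivector_def by metis
qed

lemma dyn_perp:
  assumes "perp \<xi>" "perp \<eta>"
  shows "dyn_term hb r lam \<theta> \<xi> \<eta> = (\<Sum>i\<in>UNIV. (\<theta> \<bullet> hb i) * biv_eval (Dr lam (axis i 1)) \<xi> \<eta>)"
proof -
  have w: "w3 (hb i) (axis a 1) (axis b 1) \<theta> \<xi> \<eta> = (\<theta> \<bullet> hb i) * (\<xi>$a * \<eta>$b - \<xi>$b * \<eta>$a)" for i a b
    using assms unfolding perp_def w3_def by (simp add: inner_axis1)
  have s: "(\<Sum>a\<in>UNIV. \<Sum>b\<in>UNIV. (1/2) * D$a$b * w3 (hb i) (axis a 1) (axis b 1) \<theta> \<xi> \<eta>)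
     = (\<theta> \<bullet> hb i) * ((1/2) * (biv_eval D \<xi> \<eta> - biv_eval D \<eta> \<xi>))" for i and D :: "real^'n^'n"
    unfolding w biv_eval_def by (simp add: sum_subtractf sum_distrib_left algebra_simps)
  have a: "biv_eval (Dr lam v) \<eta> \<xi> = - biv_eval (Dr lam v) \<xi> \<eta>" for v
    using sharp_antisym[OF Dr_biv] sharp_inner by metis
  have "dyn_term hb r lam \<theta> \<xi> \<eta> = (\<Sum>i\<in>UNIV. \<Sum>a\<in>UNIV. \<Sum>b\<in>UNIV.
     (1/2) * (Dr lam (axis i 1))$a$b * w3 (hb i) (axis a 1) (axis b 1) \<theta> \<xi> \<eta>)"
    unfolding dyn_term_def Dr_def ..
  also have "\<dots> = (\<Sum>i\<in>UNIV. (\<theta> \<bullet> hb i) * ((1/2) * (biv_eval (Dr lam (axis i 1)) \<xi> \<eta> - biv_eval (Dr lam (axis i 1)) \<eta> \<xi>)))"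
    by (rule sum.cong[OF refl], rule s)
  finally show ?thesis by (simp add: a)
qed

definition thv :: "real^'l \<Rightarrow> real^'n" where
  "thv v = (\<Sum>k\<in>UNIV. (v $ k) *\<^sub>R th k)"

lemma thv_h: "thv v \<bullet> hb i = v $ i"
  unfolding thv_def by (simp add: inner_sum_left th_h if_distrib cong: if_cong)

lemma key:
  assumes "perp \<xi>" "perp \<eta>"
  shows "biv_eval (Dr lam v) \<xi> \<eta> + (H (r lam) (thv v) \<xi> \<eta> + H (r lam) \<xi> \<eta> (thv v) + H (r lam) \<eta> (thv v) \<xi>) = 0"
proof -
  have "biv_eval (Dr lam v) \<xi> \<eta> = biv_eval (\<Sum>i\<in>UNIV. (v $ i) *\<^sub>R Dr lam (axis i 1)) \<xi> \<eta>"
    by (subst lin_expand[OF Dr_lin]) (rule refl)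
  also have "\<dots> = (\<Sum>i\<in>UNIV. (v $ i) * biv_eval (Dr lam (axis i 1)) \<xi> \<eta>)"
    by (simp add: linear_sum[OF linear_biv_eval[of \<xi> \<eta>]] linear_scale[OF linear_biv_eval[of \<xi> \<eta>]])
  also have "\<dots> = dyn_term hb r lam (thv v) \<xi> \<eta>"
    by (simp add: dyn_perp[OF assms] thv_h)
  finally show ?thesis
    using dcybe[of lam "thv v" \<xi> \<eta>] half_schouten[OF biv, of lam "thv v" \<xi> \<eta>] by linarith
qed

end

context trd begin

lemma sharp_neg: "sharp \<rho> (- x) = - sharp \<rho> x"
  using linear_neg[OF linear_sharp] by blast

lemma Kx_in: "Kx br x \<xi> \<bullet> y = \<xi> \<bullet> br x y"
  by (rule Kx_inner[OF lin_r])

lemma perp_add: "perp x \<Longrightarrow> perp y \<Longrightarrow> perp (x + y)"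
  unfolding perp_def by (simp add: inner_add_left)
lemma perp_neg: "perp x \<Longrightarrow> perp (- x)"
  unfolding perp_def by simp
lemma perp_scale: "perp x \<Longrightarrow> perp (c *\<^sub>R x)"
  unfolding perp_def by simp
lemma perp_sum: "(\<And>k. perp (f k)) \<Longrightarrow> perp (\<Sum>k\<in>S. f k)"
  unfolding perp_def by (simp add: inner_sum_left)

definition u :: "real^'n \<Rightarrow> 'l \<Rightarrow> real^'n" where
  "u \<theta> k = Kx br (hb k) \<theta>"

lemma u_perp: "perp (u \<theta> k)"
  unfolding perp_def u_def by (simp add: Kx_in br_hh)

definition Aop :: "real^'n^'n \<Rightarrow> real^'n \<Rightarrow> real^'n \<Rightarrow> real^'n" where
  "Aop \<rho> \<theta> x = - Pj (Kx br (sharp \<rho> \<theta>) x)"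

definition Bop :: "real^'n^'n \<Rightarrow> real^'n \<Rightarrow> real^'n \<Rightarrow> real^'n" where
  "Bop \<rho> \<theta> x = - Pj (Kx br (sharp \<rho> \<theta>) x) + Pj (Kx br (sharp \<rho> x) \<theta>)
      + (\<Sum>k\<in>UNIV. (sharp \<rho> (th k) \<bullet> x) *\<^sub>R u \<theta> k)"

lemma Aop_perp: "perp (Aop \<rho> \<theta> x)"
  unfolding Aop_def by (intro perp_neg Pj_perp)

lemma Bop_perp: "perp (Bop \<rho> \<theta> x)"
  unfolding Bop_def by (intro perp_add perp_neg Pj_perp perp_sum perp_scale u_perp)

lemma rr_decomp_l: "rr lam w \<eta> = rr lam (Pj w) \<eta> + (\<Sum>k\<in>UNIV. (w \<bullet> hb k) * rr lam (th k) \<eta>)"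
  by (subst decomp[of w]) (simp add: sharp_add sharp_sum sharp_scale inner_add_left inner_sum_left)

lemma rr_decomp_r: "rr lam \<xi> w = rr lam \<xi> (Pj w) + (\<Sum>k\<in>UNIV. (w \<bullet> hb k) * rr lam \<xi> (th k))"
  by (subst decomp[of w]) (simp add: inner_add_right inner_sum_right)

lemma coeff1: "Kx br (sharp (r lam) \<theta>) \<xi> \<bullet> hb k = rr lam (u \<theta> k) \<xi>"
proof -
  have "Kx br (sharp (r lam) \<theta>) \<xi> \<bullet> hb k = - (Kx br (hb k) \<xi> \<bullet> sharp (r lam) \<theta>)"
    by (simp add: Kx_in) (subst br_anti, simp)
  also have "\<dots> = - rr lam \<theta> (Kx br (hb k) \<xi>)" by (simp add: inner_commute)
  also have "\<dots> = rr lam (u \<theta> k) \<xi>"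
    using invariance[OF hb_span[of k], of lam \<theta> \<xi>] unfolding u_def by linarith
  finally show ?thesis .
qed

lemma coeff2: "Kx br (sharp (r lam) \<eta>) \<theta> \<bullet> hb k = rr lam (u \<theta> k) \<eta>"
proof -
  have "Kx br (sharp (r lam) \<eta>) \<theta> \<bullet> hb k = - (Kx br (hb k) \<theta> \<bullet> sharp (r lam) \<eta>)"
    by (simp add: Kx_in) (subst br_anti, simp)
  also have "\<dots> = - rr lam \<eta> (u \<theta> k)" by (simp add: inner_commute u_def)
  also have "\<dots> = rr lam (u \<theta> k) \<eta>" using rr_anti[of lam \<eta> "u \<theta> k"] by simp
  finally show ?thesis .
qed

lemma core:
  assumes p: "perp \<xi>" "perp \<eta>"
  shows "biv_eval (Dr lam v) \<xi> \<eta> = rr lam (Aop (r lam) (thv v) \<xi>) \<eta> + rr lam \<xi> (Bop (r lam) (thv v) \<eta>)"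
proof -
  let ?\<theta> = "thv v"
  let ?z = "sharp (r lam) ?\<theta>"
  have k: "biv_eval (Dr lam v) \<xi> \<eta> = - (H (r lam) ?\<theta> \<xi> \<eta> + H (r lam) \<xi> \<eta> ?\<theta> + H (r lam) \<eta> ?\<theta> \<xi>)"
    using key[OF p, of lam v] by linarith
  have h1: "H (r lam) ?\<theta> \<xi> \<eta> = - rr lam \<xi> (Kx br (sharp (r lam) \<eta>) ?\<theta>)"
  proof -
    have "rr lam \<xi> (Kx br (sharp (r lam) \<eta>) ?\<theta>) = Kx br (sharp (r lam) \<eta>) ?\<theta> \<bullet> sharp (r lam) \<xi>"
      by (rule inner_commute)
    also have "\<dots> = ?\<theta> \<bullet> br (sharp (r lam) \<eta>) (sharp (r lam) \<xi>)" by (rule Kx_in)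
    finally show ?thesis unfolding H_def by (subst br_anti) simp
  qed
  have h2: "H (r lam) \<xi> \<eta> ?\<theta> = rr lam (Kx br ?z \<xi>) \<eta>"
  proof -
    have "H (r lam) \<xi> \<eta> ?\<theta> = - (Kx br ?z \<xi> \<bullet> sharp (r lam) \<eta>)"
      unfolding H_def by (subst br_anti) (simp add: Kx_in)
    also have "\<dots> = - rr lam \<eta> (Kx br ?z \<xi>)" by (simp add: inner_commute)
    finally show ?thesis using rr_anti[of lam \<eta> "Kx br ?z \<xi>"] by simp
  qed
  have h3: "H (r lam) \<eta> ?\<theta> \<xi> = rr lam \<xi> (Kx br ?z \<eta>)"
    unfolding H_def by (simp add: Kx_in[symmetric] inner_commute)
  have d1: "rr lam (Kx br ?z \<xi>) \<eta> = rr lam (Pj (Kx br ?z \<xi>)) \<eta> + (\<Sum>k\<in>UNIV. rr lam (u ?\<theta> k) \<xi> * rr lam (th k) \<eta>)"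
    using rr_decomp_l[of lam "Kx br ?z \<xi>" \<eta>] by (simp add: coeff1)
  have d2: "rr lam \<xi> (Kx br ?z \<eta>) = rr lam \<xi> (Pj (Kx br ?z \<eta>)) + (\<Sum>k\<in>UNIV. rr lam (u ?\<theta> k) \<eta> * rr lam \<xi> (th k))"
    using rr_decomp_r[of lam \<xi> "Kx br ?z \<eta>"] by (simp add: coeff1)
  have d3: "rr lam \<xi> (Kx br (sharp (r lam) \<eta>) ?\<theta>) = rr lam \<xi> (Pj (Kx br (sharp (r lam) \<eta>) ?\<theta>))
        + (\<Sum>k\<in>UNIV. rr lam (u ?\<theta> k) \<eta> * rr lam \<xi> (th k))"
    using rr_decomp_r[of lam \<xi> "Kx br (sharp (r lam) \<eta>) ?\<theta>"] by (simp add: coeff2)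
  have d4: "- (\<Sum>k\<in>UNIV. rr lam (u ?\<theta> k) \<xi> * rr lam (th k) \<eta>) = rr lam \<xi> (\<Sum>k\<in>UNIV. (rr lam (th k) \<eta>) *\<^sub>R u ?\<theta> k)"
  proof -
    have "- (\<Sum>k\<in>UNIV. rr lam (u ?\<theta> k) \<xi> * rr lam (th k) \<eta>) = (\<Sum>k\<in>UNIV. rr lam (th k) \<eta> * rr lam \<xi> (u ?\<theta> k))"
      by (simp add: sum_negf[symmetric] rr_anti[of lam "u ?\<theta> k" \<xi> for k] mult.commute)
    then show ?thesis by (simp add: inner_sum_right)
  qed
  have "biv_eval (Dr lam v) \<xi> \<eta> = - rr lam (Pj (Kx br ?z \<xi>)) \<eta> - rr lam \<xi> (Pj (Kx br ?z \<eta>))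
      + rr lam \<xi> (Pj (Kx br (sharp (r lam) \<eta>) ?\<theta>)) + rr lam \<xi> (\<Sum>k\<in>UNIV. (rr lam (th k) \<eta>) *\<^sub>R u ?\<theta> k)"
    unfolding k h1 h2 h3 d1 d2 d3 d4[symmetric] by simp
  then show ?thesis
    unfolding Aop_def Bop_def by (simp add: sharp_add sharp_neg inner_add_right inner_add_left inner_diff_right)
qed

end

definition dD :: "real^'m^'m \<Rightarrow> real^'m^'m \<Rightarrow> real" where
  "dD M H = (\<Sum>i\<in>UNIV. det (\<chi> k. if k = i then H$k else M$k))"

lemma det_deriv:
  fixes M :: "real^'m^'m"
  shows "(det has_derivative dD M) (at M)"
proof -
  let ?P = "{p. p permutes (UNIV::'m set)}"
  have comp: "bounded_linear (\<lambda>A::real^'m^'m. A$i$j)" for i j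
    using bounded_linear_compose[OF bounded_linear_vec_nth[of j] bounded_linear_vec_nth[of i]] by simp
  have d: "((\<lambda>A::real^'m^'m. \<Sum>p\<in>?P. of_int (sign p) * (\<Prod>i\<in>UNIV. A$i$p i)) has_derivative
     (\<lambda>H::real^'m^'m. \<Sum>p\<in>?P. of_int (sign p) * (\<Sum>i\<in>UNIV. H$i$p i * (\<Prod>j\<in>UNIV-{i}. M$j$p j)))) (at M)"
    by (intro has_derivative_sum has_derivative_mult_right has_derivative_prod
        bounded_linear_imp_has_derivative comp)
  have eq: "(\<lambda>H::real^'m^'m. \<Sum>p\<in>?P. of_int (sign p) * (\<Sum>i\<in>UNIV. H$i$p i * (\<Prod>j\<in>UNIV-{i}. M$j$p j))) = dD M"
  proof
    fix H :: "real^'m^'m"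
    have pr: "(\<Prod>k\<in>UNIV. (\<chi> k. if k = i then H$k else M$k) $ k $ p k) = H$i$p i * (\<Prod>j\<in>UNIV-{i}. M$j$p j)"
      for i and p :: "'m \<Rightarrow> 'm"
    proof -
      have "(\<Prod>k\<in>UNIV. (\<chi> k. if k = i then H$k else M$k) $ k $ p k)
          = (\<chi> k. if k = i then H$k else M$k) $ i $ p i * (\<Prod>k\<in>UNIV-{i}. (\<chi> k. if k = i then H$k else M$k) $ k $ p k)"
        by (rule prod.remove) auto
      also have "\<dots> = H$i$p i * (\<Prod>j\<in>UNIV-{i}. M$j$p j)"
      proof -
        have "(\<Prod>k\<in>UNIV-{i}. (\<chi> k. if k = i then H$k else M$k) $ k $ p k) = (\<Prod>j\<in>UNIV-{i}. M$j$p j)"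
          by (rule prod.cong) auto
        then show ?thesis by simp
      qed
      finally show ?thesis .
    qed
    have "(\<Sum>p\<in>?P. of_int (sign p) * (\<Sum>i\<in>UNIV. H$i$p i * (\<Prod>j\<in>UNIV-{i}. M$j$p j)))
       = (\<Sum>p\<in>?P. \<Sum>i\<in>UNIV. of_int (sign p) * (H$i$p i * (\<Prod>j\<in>UNIV-{i}. M$j$p j)))"
      by (simp add: sum_distrib_left)
    also have "\<dots> = (\<Sum>i\<in>UNIV. \<Sum>p\<in>?P. of_int (sign p) * (H$i$p i * (\<Prod>j\<in>UNIV-{i}. M$j$p j)))"
      by (rule sum.swap)
    also have "\<dots> = dD M H"
      unfolding dD_def det_def pr ..
    finally show "(\<Sum>p\<in>?P. of_int (sign p) * (\<Sum>i\<in>UNIV. H$i$p i * (\<Prod>j\<in>UNIV-{i}. M$j$p j))) = dD M H" .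
  qed
  have "det = (\<lambda>A::real^'m^'m. \<Sum>p\<in>?P. of_int (sign p) * (\<Prod>i\<in>UNIV. A$i$p i))"
    unfolding det_def[abs_def] ..
  then show ?thesis using d eq by simp
qed

lemma dD_linear: "linear (dD M)"
  using has_derivative_linear[OF det_deriv] .

lemma linear_transp: "linear (transpose :: real^'n^'m \<Rightarrow> real^'m^'n)"
  by (rule linearI) (simp_all add: vec_eq_iff transpose_def)

lemma dD_left: "dD M (X ** M) = trace X * det M"
proof -
  have row: "(X ** M) $ i = (\<Sum>j\<in>UNIV. X$i$j *s M$j)" for i
    by (simp add: vec_eq_iff matrix_matrix_mult_def sum_component)
  have one: "det (\<chi> k. if k = i then (X ** M)$k else M$k) = X$i$i * det M" for i
  proof -
    have "det (\<chi> k. if k = i then (X ** M)$k else M$k) = det (\<chi> k. if k = i then (\<Sum>j\<in>UNIV. X$i$j *s M$j) else M$k)"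
      by (rule arg_cong[where f=det]) (auto simp: vec_eq_iff row)
    also have "\<dots> = (\<Sum>j\<in>UNIV. det (\<chi> k. if k = i then X$i$j *s M$j else M$k))"
      by (rule det_linear_row_sum) simp
    also have "\<dots> = (\<Sum>j\<in>UNIV. X$i$j * det (\<chi> k. if k = i then M$j else M$k))"
      by (simp add: det_row_mul)
    also have "\<dots> = X$i$i * det M"
    proof -
      have z: "det (\<chi> k. if k = i then M$j else M$k) = 0" if "j \<noteq> i" for j
        by (rule det_identical_rows[of i j]) (use that in \<open>auto simp: row_def vec_eq_iff\<close>)
      have "(\<Sum>j\<in>UNIV. X$i$j * det (\<chi> k. if k = i then M$j else M$k))
          = X$i$i * det (\<chi> k. if k = i then M$i else M$k)
            + (\<Sum>j\<in>UNIV-{i}. X$i$j * det (\<chi> k. if k = i then M$j else M$k))"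
        by (rule sum.remove) auto
      also have "(\<Sum>j\<in>UNIV-{i}. X$i$j * det (\<chi> k. if k = i then M$j else M$k)) = 0"
        by (rule sum.neutral) (simp add: z)
      also have "(\<chi> k. if k = i then M$i else M$k) = M" by (simp add: vec_eq_iff)
      finally show ?thesis by simp
    qed
    finally show ?thesis .
  qed
  show ?thesis unfolding dD_def trace_def by (simp add: one sum_distrib_right)
qed

lemma trace_transp: "trace (transpose Y) = trace (Y::real^'m^'m)"
  unfolding trace_def transpose_def by simp

lemma dD_transpose: "dD M H = dD (transpose M) (transpose H)"
proof -
  have bl: "bounded_linear (transpose :: real^'m^'m \<Rightarrow> real^'m^'m)"
    using linear_transp linear_conv_bounded_linear by blast
  have 1: "((\<lambda>A. det (transpose A)) has_derivative (\<lambda>H. dD (transpose M) (transpose H))) (at M)"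
    using has_derivative_compose[OF bounded_linear_imp_has_derivative[OF bl] det_deriv[of "transpose M"]] .
  have 2: "((\<lambda>A. det (transpose A)) has_derivative dD M) (at M)"
    using det_deriv[of M] by simp
  have "(\<lambda>H. dD (transpose M) (transpose H)) = dD M"
    by (rule has_derivative_unique[OF 1 2])
  then show ?thesis by metis
qed

lemma dD_right: "dD M (M ** Y) = trace Y * det M"
  by (simp add: dD_transpose[of M] matrix_transpose_mul dD_left trace_transp)

lemma gronwall_nz:
  fixes f c :: "real \<Rightarrow> real"
  assumes d: "\<And>t. 0 \<le> t \<Longrightarrow> t \<le> 1 \<Longrightarrow> (f has_real_derivative (c t * f t)) (at t)"
    and b: "\<And>t. 0 \<le> t \<Longrightarrow> t \<le> 1 \<Longrightarrow> \<bar>c t\<bar> \<le> K" and f0: "f 0 \<noteq> 0"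
  shows "f 1 \<noteq> 0"
proof -
  define g where "g t = (f t)^2 * exp (2*K*t)" for t
  have "g 0 \<le> g 1"
  proof (rule DERIV_nonneg_imp_nondecreasing[of 0 1 g])
    fix t :: real assume t: "0 \<le> t" "t \<le> 1"
    have "(g has_real_derivative (2 * f t * (c t * f t) * exp (2*K*t) + (f t)^2 * (exp (2*K*t) * (2*K)))) (at t)"
      unfolding g_def
      by (auto intro!: derivative_eq_intros d[OF t] simp: power2_eq_square)
    moreover have "0 \<le> 2 * f t * (c t * f t) * exp (2*K*t) + (f t)^2 * (exp (2*K*t) * (2*K))"
    proof -
      have "2 * f t * (c t * f t) * exp (2*K*t) + (f t)^2 * (exp (2*K*t) * (2*K))
          = 2 * (f t)^2 * exp (2*K*t) * (c t + K)"
        by (simp add: power2_eq_square algebra_simps)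
      moreover have "c t + K \<ge> 0" using b[OF t] by linarith
      ultimately show ?thesis by simp
    qed
    ultimately show "\<exists>y. DERIV g t :> y \<and> 0 \<le> y" by blast
  qed simp
  then have "0 < g 1" using f0 unfolding g_def by (smt (verit) exp_gt_zero mult_pos_pos power2_less_0 zero_less_power2)
  then show ?thesis unfolding g_def by auto
qed


context trd begin

definition ND :: "real^'l \<Rightarrow> bool" where
  "ND lam \<longleftrightarrow> (\<forall>\<eta>. perp \<eta> \<longrightarrow> (\<forall>\<xi>. perp \<xi> \<longrightarrow> rr lam \<xi> \<eta> = 0) \<longrightarrow> \<eta> = 0)"

definition nf :: "real^'l \<Rightarrow> real^'n \<Rightarrow> real^'n \<Rightarrow> real" where
  "nf lam x y = rr lam (Pj x) (Pj y) + (\<Sum>k\<in>UNIV. (x \<bullet> hb k) * (y \<bullet> hb k))"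

definition Nm :: "real^'l \<Rightarrow> real^'n^'n" where
  "Nm lam = (\<chi> a b. nf lam (axis a 1) (axis b 1))"

lemma Pj_add: "Pj (x + y) = Pj x + Pj y" using linear_add[OF Pj_lin] .
lemma Pj_scale: "Pj (c *\<^sub>R x) = c *\<^sub>R Pj x" using linear_scale[OF Pj_lin] .
lemma Pj_neg: "Pj (- x) = - Pj x" using linear_neg[OF Pj_lin] .

lemma nf_lin1: "linear (\<lambda>x. nf lam x y)"
  unfolding nf_def
  by (rule linearI) (simp_all add: Pj_add Pj_scale sharp_add sharp_scale inner_add_left
      algebra_simps sum.distrib sum_distrib_left)

lemma nf_lin2: "linear (\<lambda>y. nf lam x y)"
  unfolding nf_def
  by (rule linearI) (simp_all add: Pj_add Pj_scale inner_add_right inner_add_left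
      algebra_simps sum.distrib sum_distrib_left)

lemma nf_mat: "nf lam x y = x \<bullet> (Nm lam *v y)"
proof -
  have "x \<bullet> (Nm lam *v y) = (\<Sum>a\<in>UNIV. x$a * (\<Sum>b\<in>UNIV. nf lam (axis a 1) (axis b 1) * y$b))"
    unfolding Nm_def inner_vec_def by (simp add: matrix_vector_mult_def)
  also have "\<dots> = (\<Sum>a\<in>UNIV. x$a * nf lam (axis a 1) y)"
    by (subst (2) lin_expand[OF nf_lin2]) (simp add: mult.commute)
  also have "\<dots> = nf lam x y"
    by (subst (2) lin_expand[OF nf_lin1]) simp
  finally show ?thesis by simp
qed

lemma nf_perp_l: "perp w \<Longrightarrow> nf lam w y = rr lam w (Pj y)"
  unfolding nf_def by (simp add: Pj_fix perp_def)

lemma nf_perp_r: "perp w \<Longrightarrow> nf lam x w = rr lam (Pj x) w"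
  unfolding nf_def by (simp add: Pj_fix perp_def)

lemma det_Nm: "det (Nm lam) \<noteq> 0 \<longleftrightarrow> ND lam"
proof -
  have "det (Nm lam) \<noteq> 0 \<longleftrightarrow> inj ((*v) (Nm lam))"
    using det_nz_iff_inj[OF matrix_vector_mul_linear[of "Nm lam"]] by simp
  also have "\<dots> \<longleftrightarrow> (\<forall>y. Nm lam *v y = 0 \<longrightarrow> y = 0)"
    using linear_injective_0[OF matrix_vector_mul_linear[of "Nm lam"]] by simp
  also have "\<dots> \<longleftrightarrow> (\<forall>y. (\<forall>x. nf lam x y = 0) \<longrightarrow> y = 0)"
    unfolding nf_mat by (metis inner_eq_zero_iff inner_zero_right)
  also have "\<dots> \<longleftrightarrow> ND lam"
  proof
    assume h: "\<forall>y. (\<forall>x. nf lam x y = 0) \<longrightarrow> y = 0"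
    show "ND lam" unfolding ND_def
    proof (intro allI impI)
      fix \<eta> assume p: "perp \<eta>" and z: "\<forall>\<xi>. perp \<xi> \<longrightarrow> rr lam \<xi> \<eta> = 0"
      have "nf lam x \<eta> = 0" for x
        using z Pj_perp p by (simp add: nf_perp_r)
      then show "\<eta> = 0" using h by blast
    qed
  next
    assume nd: "ND lam"
    show "\<forall>y. (\<forall>x. nf lam x y = 0) \<longrightarrow> y = 0"
    proof (intro allI impI)
      fix y assume z: "\<forall>x. nf lam x y = 0"
      have "rr lam \<xi> (Pj y) = 0" if "perp \<xi>" for \<xi>
        using z[rule_format, of \<xi>] that by (simp add: nf_perp_l Pj_fix)
      then have py: "Pj y = 0" using nd Pj_perp unfolding ND_def by blast
      have "y \<bullet> hb m = 0" for m
      proof -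
        have "(\<Sum>k\<in>UNIV. (th m \<bullet> hb k) * (y \<bullet> hb k)) = (\<Sum>k\<in>UNIV. if k = m then y \<bullet> hb k else 0)"
          by (rule sum.cong) (auto simp: th_h)
        then have "nf lam (th m) y = y \<bullet> hb m"
          unfolding nf_def py by simp
        then show ?thesis using z by simp
      qed
      then have "perp y" unfolding perp_def by blast
      then show "y = 0" using py Pj_fix by simp
    qed
  qed
  finally show ?thesis .
qed


lemma g_iff: "g_lambda hb r lam = UNIV \<longleftrightarrow> ND lam"
proof
  assume U: "g_lambda hb r lam = UNIV"
  show "ND lam" unfolding ND_def
  proof (intro allI impI)
    fix \<eta> assume p: "perp \<eta>" and z: "\<forall>\<xi>. perp \<xi> \<longrightarrow> rr lam \<xi> \<eta> = 0"
    have "\<eta> \<in> g_lambda hb r lam" using U by simp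
    then obtain x \<xi> where e: "\<eta> = x + sharp (r lam) \<xi>" "x \<in> span (range hb)" "\<xi> \<in> h_perp hb"
      unfolding g_lambda_def by blast
    have "\<eta> \<bullet> \<eta> = \<eta> \<bullet> x + \<eta> \<bullet> sharp (r lam) \<xi>"
      by (subst (2) e(1)) (simp add: inner_add_right)
    also have "\<eta> \<bullet> x = 0" using span_orth[OF e(2) p] .
    also have "\<eta> \<bullet> sharp (r lam) \<xi> = 0"
      using z e(3) unfolding h_perp_iff by (simp add: inner_commute)
    finally show "\<eta> = 0" by simp
  qed
next
  assume nd: "ND lam"
  define T where "T \<xi> = sharp (r lam) (Pj \<xi>) + (\<Sum>k\<in>UNIV. (\<xi> \<bullet> hb k) *\<^sub>R hb k)" for \<xi>
  have lT: "linear T"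
    unfolding T_def
    by (rule linearI) (simp_all add: Pj_add Pj_scale sharp_add sharp_scale inner_add_left
        scaleR_add_left sum.distrib scaleR_sum_right algebra_simps)
  have iT: "inj T"
    unfolding linear_injective_0[OF lT]
  proof (intro allI impI)
    fix \<xi> assume z: "T \<xi> = 0"
    have "rr lam \<zeta> (Pj \<xi>) = 0" if "perp \<zeta>" for \<zeta>
    proof -
      have "0 = T \<xi> \<bullet> \<zeta>" using z by simp
      also have "\<dots> = rr lam (Pj \<xi>) \<zeta> + (\<Sum>k\<in>UNIV. (\<xi> \<bullet> hb k) *\<^sub>R hb k) \<bullet> \<zeta>"
        unfolding T_def by (simp add: inner_add_left)
      also have "(\<Sum>k\<in>UNIV. (\<xi> \<bullet> hb k) *\<^sub>R hb k) \<bullet> \<zeta> = 0"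
        using span_orth[OF comb_span that] by (simp add: inner_commute)
      finally show ?thesis using rr_anti[of lam \<zeta> "Pj \<xi>"] by simp
    qed
    then have pz: "Pj \<xi> = 0" using nd Pj_perp unfolding ND_def by blast
    then have "(\<Sum>k\<in>UNIV. (\<xi> \<bullet> hb k) *\<^sub>R hb k) = 0" using z unfolding T_def by (simp add: sharp_zero)
    then have "perp \<xi>" unfolding perp_def using comb_zero[of "\<lambda>k. \<xi> \<bullet> hb k"] by blast
    then show "\<xi> = 0" using pz Pj_fix by simp
  qed
  have sT: "surj T" by (rule linear_inj_imp_surj[OF lT iT])
  show "g_lambda hb r lam = UNIV"
  proof (rule set_eqI, rule iffI)
    fix w :: "real^'n"
    obtain \<xi> where w: "w = T \<xi>" using sT by (metis surjD)
    show "w \<in> g_lambda hb r lam"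
      unfolding g_lambda_def w T_def
      by (rule CollectI, rule exI[of _ "(\<Sum>k\<in>UNIV. (\<xi> \<bullet> hb k) *\<^sub>R hb k)"], rule exI[of _ "sharp (r lam) (Pj \<xi>)"])
         (auto simp: comb_span h_perp_iff Pj_perp)
  qed simp
qed

definition LL :: "real^'l \<Rightarrow> (real^'l) \<times> (real^'n) \<Rightarrow> (real^'l) \<times> (real^'n)" where
  "LL lam p = (istar hb (snd p), - (\<Sum>i\<in>UNIV. (fst p)$i *\<^sub>R hb i) + sharp (r lam) (snd p))"

lemma LL_eq: "Lambda_sharp hb r lam = LL lam"
  unfolding Lambda_sharp_def LL_def by auto

lemma LL_lin: "linear (LL lam)"
  unfolding LL_def
  by (rule linearI) (simp_all add: istar_def vec_eq_iff inner_add_left sharp_add sharp_scale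
      scaleR_add_left sum.distrib scaleR_sum_right algebra_simps)

lemma LL_inj_iff: "inj (LL lam) \<longleftrightarrow> ND lam"
proof -
  have "inj (LL lam) \<longleftrightarrow> (\<forall>p. LL lam p = 0 \<longrightarrow> p = 0)"
    using linear_injective_0[OF LL_lin] .
  also have "\<dots> \<longleftrightarrow> ND lam"
  proof
    assume h: "\<forall>p. LL lam p = 0 \<longrightarrow> p = 0"
    show "ND lam" unfolding ND_def
    proof (intro allI impI)
      fix \<eta> assume p: "perp \<eta>" and z: "\<forall>\<xi>. perp \<xi> \<longrightarrow> rr lam \<xi> \<eta> = 0"
      define w where "w = sharp (r lam) \<eta>"
      have "w \<bullet> \<xi> = 0" if "perp \<xi>" for \<xi>
        using z that rr_anti[of lam \<eta> \<xi>] unfolding w_def by simp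
      then have we: "w = (\<Sum>k\<in>UNIV. (w \<bullet> th k) *\<^sub>R hb k)" by (rule orth_perp)
      have e1: "istar hb \<eta> = 0" using p unfolding istar_def perp_def by (simp add: vec_eq_iff)
      have "(\<Sum>i\<in>UNIV. (\<chi> k. w \<bullet> th k)$i *\<^sub>R hb i) = (\<Sum>i\<in>UNIV. (w \<bullet> th i) *\<^sub>R hb i)" by simp
      also have "\<dots> = w" by (rule we[symmetric])
      finally have e2: "(\<Sum>i\<in>UNIV. (\<chi> k. w \<bullet> th k)$i *\<^sub>R hb i) = w" .
      have "LL lam ((\<chi> k. w \<bullet> th k), \<eta>) = 0"
      proof -
        have e3: "sharp (r lam) \<eta> = w" by (simp add: w_def)
        show ?thesis unfolding LL_def fst_conv snd_conv e1 e2 e3 by (simp add: zero_prod_def)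
      qed
      then have "((\<chi> k. w \<bullet> th k), \<eta>) = 0" using h by blast
      then show "\<eta> = 0" by (simp add: zero_prod_def)
    qed
  next
    assume nd: "ND lam"
    show "\<forall>p. LL lam p = 0 \<longrightarrow> p = 0"
    proof (intro allI impI)
      fix p assume z: "LL lam p = 0"
      obtain c \<xi> where pe: "p = (c, \<xi>)" by fastforce
      have z1: "istar hb \<xi> = 0" and z2: "sharp (r lam) \<xi> = (\<Sum>i\<in>UNIV. c$i *\<^sub>R hb i)"
        using z unfolding pe LL_def by (auto simp: algebra_simps zero_prod_def)
      have pxi: "perp \<xi>" using z1 unfolding perp_def istar_def by (simp add: vec_eq_iff)
      have "rr lam \<eta> \<xi> = 0" if "perp \<eta>" for \<eta>
      proof -
        have "rr lam \<xi> \<eta> = 0" unfolding z2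
          using span_orth[OF comb_span that] by (simp add: inner_commute)
        then show ?thesis using rr_anti[of lam \<eta> \<xi>] by simp
      qed
      then have x0: "\<xi> = 0" using nd pxi unfolding ND_def by blast
      then have "(\<Sum>i\<in>UNIV. c$i *\<^sub>R hb i) = 0" using z2 by (simp add: sharp_zero)
      then have "c = 0" using comb_zero by (simp add: vec_eq_iff)
      then show "p = 0" using x0 pe by (simp add: zero_prod_def)
    qed
  qed
  finally show ?thesis .
qed

lemma LL_bij_iff: "bij (LL lam) \<longleftrightarrow> inj (LL lam)"
  using linear_inj_imp_surj[OF LL_lin] unfolding bij_def by blast

lemma pi_LL: "pi_form hb r lam \<alpha> \<beta> = LL lam \<alpha> \<bullet> \<beta>"
proof -
  obtain c \<xi> where a: "\<alpha> = (c, \<xi>)" by fastforce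
  obtain c' \<eta> where b: "\<beta> = (c', \<eta>)" by fastforce
  show ?thesis
  proof -
    have 1: "(\<chi> i. \<xi> \<bullet> hb i) \<bullet> c' = (\<Sum>i\<in>UNIV. (\<xi> \<bullet> hb i) * c'$i)"
      by (simp add: inner_vec_def)
    have 2: "sharp (r lam) \<xi> \<bullet> \<eta> = biv_eval (r lam) \<xi> \<eta>"
      by (rule sharp_inner)
    have 3: "(\<Sum>i\<in>UNIV. c$i *\<^sub>R hb i) \<bullet> \<eta> = (\<Sum>i\<in>UNIV. c$i * (\<eta> \<bullet> hb i))"
      by (subst inner_commute) (simp add: inner_sum_right)
    have "LL lam (c, \<xi>) \<bullet> (c', \<eta>) = (\<chi> i. \<xi> \<bullet> hb i) \<bullet> c' + (sharp (r lam) \<xi> \<bullet> \<eta> - (\<Sum>i\<in>UNIV. c$i *\<^sub>R hb i) \<bullet> \<eta>)"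
      unfolding LL_def by (simp add: inner_prod_def istar_def inner_add_left inner_diff_left)
    also have "\<dots> = pi_form hb r lam (c, \<xi>) (c', \<eta>)"
      unfolding 1 2 3 pi_form_def by (simp add: sum_subtractf)
    finally show ?thesis unfolding a b by simp
  qed
qed

lemma sympl_iff: "symplectic_pi hb r \<longleftrightarrow> (\<forall>lam. inj (LL lam))"
proof -
  have "(\<forall>\<beta>. pi_form hb r lam \<alpha> \<beta> = 0) \<longleftrightarrow> LL lam \<alpha> = 0" for lam \<alpha>
    unfolding pi_LL by (metis inner_eq_zero_iff inner_zero_left)
  then show ?thesis
    unfolding symplectic_pi_def linear_injective_0[OF LL_lin] by simp
qed

end

lemma sharp_madd: "sharp (\<rho> + \<sigma>) x = sharp \<rho> x + sharp \<sigma> x"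
  by (simp add: sharp_def vec_eq_iff matrix_vector_mult_def transpose_def algebra_simps sum.distrib)

lemma sharp_mscale: "sharp (c *\<^sub>R \<rho>) x = c *\<^sub>R sharp \<rho> x"
  by (simp add: sharp_def vec_eq_iff matrix_vector_mult_def transpose_def sum_distrib_left algebra_simps)

context trd begin

lemma Kx_add1: "Kx br (p + q) \<xi> = Kx br p \<xi> + Kx br q \<xi>"
  unfolding Kx_def by (simp add: vec_eq_iff linear_add[OF lin_l] inner_add_right)

lemma Kx_scale1: "Kx br (c *\<^sub>R p) \<xi> = c *\<^sub>R Kx br p \<xi>"
  unfolding Kx_def by (simp add: vec_eq_iff linear_scale[OF lin_l])

definition Phi :: "real^'n^'n \<Rightarrow> real^'n^'n" where
  "Phi \<rho> = (\<chi> a b. sharp \<rho> (Pj (axis a 1)) \<bullet> Pj (axis b 1))"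

definition Sc :: "real^'n^'n" where
  "Sc = (\<chi> a b. \<Sum>k\<in>UNIV. (axis a 1 \<bullet> hb k) * (axis b 1 \<bullet> hb k))"

lemma Nm_Phi: "Nm lam = Phi (r lam) + Sc"
  unfolding Nm_def Phi_def Sc_def nf_def by (simp add: vec_eq_iff)

lemma Phi_bl: "bounded_linear Phi"
proof -
  have "linear Phi"
    unfolding Phi_def
    by (rule linearI) (simp_all add: vec_eq_iff sharp_madd sharp_mscale inner_add_left)
  then show ?thesis using linear_conv_bounded_linear by blast
qed

definition cc :: "real^'n \<Rightarrow> real^'n^'n \<Rightarrow> real" where
  "cc \<theta> \<rho> = (\<Sum>a\<in>UNIV. Aop \<rho> \<theta> (Pj (axis a 1)) $ a + Bop \<rho> \<theta> (Pj (axis a 1)) $ a)"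

lemma cc_bl: "bounded_linear (cc \<theta>)"
proof -
  have "linear (cc \<theta>)"
    unfolding cc_def Aop_def Bop_def
    by (rule linearI) (simp_all add: sharp_madd sharp_mscale Kx_add1 Kx_scale1 Pj_add Pj_scale Pj_neg
        inner_add_left scaleR_add_left sum.distrib sum_subtractf scaleR_sum_right algebra_simps sum_distrib_left)
  then show ?thesis using linear_conv_bounded_linear by blast
qed

lemma matrix_apply: "matrix f $ i $ j = f (axis j 1) $ i"
  unfolding matrix_def by simp

lemma Phi_D: "Phi (Dr lam w) = transpose (matrix (\<lambda>x. Aop (r lam) (thv w) (Pj x))) ** Nm lam
   + Nm lam ** matrix (\<lambda>x. Bop (r lam) (thv w) (Pj x))"
proof -
  let ?A = "\<lambda>x. Aop (r lam) (thv w) (Pj x)"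
  let ?B = "\<lambda>x. Bop (r lam) (thv w) (Pj x)"
  have "Phi (Dr lam w) $ a $ b = (transpose (matrix ?A) ** Nm lam + Nm lam ** matrix ?B) $ a $ b" for a b
  proof -
    have l: "Phi (Dr lam w) $ a $ b = rr lam (?A (axis a 1)) (Pj (axis b 1)) + rr lam (Pj (axis a 1)) (?B (axis b 1))"
      unfolding Phi_def using core[OF Pj_perp Pj_perp, of lam w "axis a 1" "axis b 1"]
      by (simp add: sharp_inner)
    have r1: "(transpose (matrix ?A) ** Nm lam) $ a $ b = nf lam (?A (axis a 1)) (axis b 1)"
      unfolding matrix_matrix_mult_def transpose_def matrix_apply Nm_def
      by (simp add: lin_expand[OF nf_lin1[of lam "axis b 1"], of "?A (axis a 1)"])
    have r2: "(Nm lam ** matrix ?B) $ a $ b = nf lam (axis a 1) (?B (axis b 1))"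
      unfolding matrix_matrix_mult_def matrix_apply Nm_def
      by (simp add: lin_expand[OF nf_lin2[of lam "axis a 1"], of "?B (axis b 1)"] mult.commute)
    show ?thesis
      using l r1 r2 nf_perp_l[OF Aop_perp] nf_perp_r[OF Bop_perp] by simp
  qed
  then show ?thesis by (simp add: vec_eq_iff)
qed

lemma trace_matrix: "trace (matrix f) = (\<Sum>a\<in>UNIV. f (axis a 1) $ a)"
  unfolding trace_def matrix_apply ..

lemma phi_deriv:
  "((\<lambda>t. det (Nm (lam0 + t *\<^sub>R w))) has_real_derivative
      (cc (thv w) (r (lam0 + t *\<^sub>R w)) * det (Nm (lam0 + t *\<^sub>R w)))) (at t)"
proof -
  let ?g = "lam0 + t *\<^sub>R w"
  have h1: "((\<lambda>t. lam0 + t *\<^sub>R w) has_derivative (\<lambda>s. s *\<^sub>R w)) (at t)"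
    by (auto intro!: derivative_eq_intros)
  have h2: "((\<lambda>t. r (lam0 + t *\<^sub>R w)) has_derivative (\<lambda>s. Dr ?g (s *\<^sub>R w))) (at t)"
    using has_derivative_compose[OF h1 r_deriv] .
  have h3: "((\<lambda>t. Nm (lam0 + t *\<^sub>R w)) has_derivative (\<lambda>s. Phi (Dr ?g (s *\<^sub>R w)))) (at t)"
    unfolding Nm_Phi
    by (rule has_derivative_add_const, rule bounded_linear.has_derivative[OF Phi_bl h2])
  have h4: "((\<lambda>t. det (Nm (lam0 + t *\<^sub>R w))) has_derivative
      (\<lambda>s. dD (Nm ?g) (Phi (Dr ?g (s *\<^sub>R w))))) (at t)"
    using has_derivative_compose[OF h3 det_deriv] .
  have eq: "dD (Nm ?g) (Phi (Dr ?g (s *\<^sub>R w))) = (cc (thv w) (r ?g) * det (Nm ?g)) * s" for s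
  proof -
    have "dD (Nm ?g) (Phi (Dr ?g (s *\<^sub>R w))) = s * dD (Nm ?g) (Phi (Dr ?g w))"
      using linear_scale[OF Dr_lin, of ?g s w] linear_scale[OF bounded_linear.linear[OF Phi_bl]]
        linear_scale[OF dD_linear] by simp
    also have "dD (Nm ?g) (Phi (Dr ?g w)) = cc (thv w) (r ?g) * det (Nm ?g)"
      unfolding Phi_D linear_add[OF dD_linear] dD_left dD_right trace_transp trace_matrix cc_def
      by (simp add: sum.distrib algebra_simps)
    finally show ?thesis by simp
  qed
  show ?thesis
    unfolding has_field_derivative_def using h4 unfolding eq .
qed

lemma propagate:
  assumes "ND lam0" shows "ND lam1"
proof -
  define w where "w = lam1 - lam0"
  define f where "f t = det (Nm (lam0 + t *\<^sub>R w))" for t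
  define c where "c t = cc (thv w) (r (lam0 + t *\<^sub>R w))" for t
  have cont: "continuous_on UNIV c"
    unfolding c_def
    by (rule continuous_on_compose2[OF linear_continuous_on[OF cc_bl]],
        rule continuous_on_compose2[OF r_cont]) (auto intro!: continuous_intros)
  have "compact (c ` {0..1})"
    by (rule compact_continuous_image[OF continuous_on_subset[OF cont] compact_Icc]) simp
  then obtain K where K: "\<And>x. x \<in> c ` {0..1} \<Longrightarrow> norm x \<le> K"
    using compact_imp_bounded bounded_iff by metis
  have "f 1 \<noteq> 0"
  proof (rule gronwall_nz[of f c K])
    show "(f has_real_derivative c t * f t) (at t)" for t
      unfolding f_def c_def by (rule phi_deriv)
    show "\<bar>c t\<bar> \<le> K" if "0 \<le> t" "t \<le> 1" for t
      using K[of "c t"] that by auto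
    show "f 0 \<noteq> 0" unfolding f_def using assms det_Nm by simp
  qed
  then show ?thesis unfolding f_def w_def using det_Nm by simp
qed

end

theorem corollary2p5:
  fixes br :: "real^'n \<Rightarrow> real^'n \<Rightarrow> real^'n"
    and hb :: "'l::finite \<Rightarrow> real^'n"
    and r :: "real^'l \<Rightarrow> real^'n^'n"
  assumes "lie_algebra br"
    and "abelian_subalg_basis br hb"
    and "triangular_dyn_rmatrix br hb r"
  shows "((\<exists>lam. g_lambda hb r lam = UNIV) \<longleftrightarrow> (\<forall>lam. bij (Lambda_sharp hb r lam)))
       \<and> ((\<forall>lam. bij (Lambda_sharp hb r lam)) \<longleftrightarrow> (\<forall>lam. g_lambda hb r lam = UNIV))
       \<and> ((\<forall>lam. g_lambda hb r lam = UNIV) \<longleftrightarrow> symplectic_pi hb r)"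
proof -
  interpret trd br hb r using assms by (unfold_locales)
  have g: "g_lambda hb r lam = UNIV \<longleftrightarrow> ND lam" for lam by (rule g_iff)
  have b: "bij (Lambda_sharp hb r lam) \<longleftrightarrow> ND lam" for lam
    unfolding LL_eq LL_bij_iff LL_inj_iff ..
  have s: "symplectic_pi hb r \<longleftrightarrow> (\<forall>lam. ND lam)"
    unfolding sympl_iff LL_inj_iff ..
  have p: "(\<exists>lam. ND lam) \<longleftrightarrow> (\<forall>lam. ND lam)"
    using propagate by blast
  show ?thesis unfolding g b s using p by blast
qed


end
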